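(* Let $\langle\cdot,\cdot\rangle$ be an inner product on $\mathrm{span}(\mathcal{H})$ and let $d(A,B)=\langle h_A-h_B,h_A-h_B\rangle^{1/2}$ for $A,B\in\mathcal{K}_n$. Let $A_1,\dots,A_N\in\mathcal{K}_n$ with $N\geq 1$. Then the convex body $X\in\mathcal{K}_n$ minimizing $\sum_{i=1}^N d(A_i,X)^2$ is $X=\frac{1}{N}\sum_{i=1}^N A_i$ (Minkowski sum).
   Context: A convex body is a closed, bounded, non-empty convex subset of $\mathbb{R}^n$; $\mathcal{K}_n$ is the set of convex bodies in $\mathbb{R}^n$ with Minkowski addition and nonnegative scaling. The support function of $A$ is $h_A(x)=\sup\{a\cdot x: a\in A\}$; $\mathcal{H}=\{h_A : A\in\mathcal{K}_n\}$ and $\mathrm{span}(\mathcal{H})$ is its linear span among real functions on $\mathbb{R}^n$. *)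

theory Defs
  imports "HOL-Analysis.Analysis" "HOL-Library.Set_Algebras"
begin

definition convex_bodies :: "'a::euclidean_space set set" where
  "convex_bodies = {A. closed A \<and> bounded A \<and> A \<noteq> {} \<and> convex A}"

definition support_fun :: "'a::euclidean_space set \<Rightarrow> 'a \<Rightarrow> real" where
  "support_fun A x = (SUP a\<in>A. a \<bullet> x)"

definition span_H :: "('a::euclidean_space \<Rightarrow> real) set" where
  "span_H = {f. \<exists>(k::nat) (c::nat \<Rightarrow> real) (B::nat \<Rightarrow> 'a set).
                 (\<forall>i<k. B i \<in> convex_bodies) \<and>
                 f = (\<lambda>x. \<Sum>i<k. c i * support_fun (B i) x)}"

definition inner_product_on_span_H ::
    "(('a::euclidean_space \<Rightarrow> real) \<Rightarrow> ('a \<Rightarrow> real) \<Rightarrow> real) \<Rightarrow> bool" where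
  "inner_product_on_span_H ip \<longleftrightarrow>
     (\<forall>f\<in>span_H. \<forall>g\<in>span_H. ip f g = ip g f) \<and>
     (\<forall>f\<in>span_H. \<forall>g\<in>span_H. \<forall>k\<in>span_H. ip (\<lambda>x. f x + g x) k = ip f k + ip g k) \<and>
     (\<forall>f\<in>span_H. \<forall>g\<in>span_H. \<forall>c::real. ip (\<lambda>x. c * f x) g = c * ip f g) \<and>
     (\<forall>f\<in>span_H. ip f f \<ge> 0) \<and>
     (\<forall>f\<in>span_H. ip f f = 0 \<longrightarrow> f = (\<lambda>x. 0))"

definition body_dist ::
    "(('a::euclidean_space \<Rightarrow> real) \<Rightarrow> ('a \<Rightarrow> real) \<Rightarrow> real) \<Rightarrow> 'a set \<Rightarrow> 'a set \<Rightarrow> real" where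
  "body_dist ip A B =
     sqrt (ip (\<lambda>x. support_fun A x - support_fun B x) (\<lambda>x. support_fun A x - support_fun B x))"

text \<open>Minkowski average (1/N)(A_0 + ... + A_{N-1}); the sum is the Minkowski sum
  from Set_Algebras.\<close>
definition minkowski_average :: "nat \<Rightarrow> (nat \<Rightarrow> 'a::euclidean_space set) \<Rightarrow> 'a set" where
  "minkowski_average N A = (\<lambda>v. (1 / real N) *\<^sub>R v) ` (\<Sum>i<N. A i)"

end

theory Submission
  imports Defs
begin

definition cb :: "'a::euclidean_space set \<Rightarrow> bool" where
  "cb S \<longleftrightarrow> compact S \<and> convex S \<and> S \<noteq> {}"

lemma cb_iff: "S \<in> convex_bodies \<longleftrightarrow> cb S"
  unfolding convex_bodies_def cb_def using compact_eq_bounded_closed by blast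

lemma support_fun_max:
  assumes "a0 \<in> A" "\<forall>a\<in>A. a \<bullet> x \<le> a0 \<bullet> x"
  shows "support_fun A x = a0 \<bullet> x"
  unfolding support_fun_def by (rule cSup_eq_maximum) (use assms in auto)

lemma support_fun_att:
  assumes "cb (A::'a::euclidean_space set)"
  shows "\<exists>a0\<in>A. support_fun A x = a0 \<bullet> x \<and> (\<forall>a\<in>A. a \<bullet> x \<le> a0 \<bullet> x)"
proof -
  have "\<exists>a0\<in>A. \<forall>a\<in>A. (\<lambda>a. a \<bullet> x) a \<le> (\<lambda>a. a \<bullet> x) a0"
    using assms unfolding cb_def
    by (intro continuous_attains_sup) (auto intro!: continuous_intros)
  then obtain a0 where "a0 \<in> A" "\<forall>a\<in>A. a \<bullet> x \<le> a0 \<bullet> x" by auto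
  then show ?thesis using support_fun_max[of a0 A x] by blast
qed

lemma cb_plus:
  assumes "cb A" "cb B"
  shows "cb (A + B) \<and> support_fun (A + B) x = support_fun A x + support_fun B x"
proof -
  have e: "A + B = {x + y |x y. x \<in> A \<and> y \<in> B}" by (auto simp: set_plus_def)
  have "cb (A + B)" using assms unfolding cb_def e[symmetric]
    by (auto intro: convex_set_plus) (auto simp: e intro!: compact_sums)
  moreover
  obtain a0 where a0: "a0 \<in> A" "support_fun A x = a0 \<bullet> x" "\<forall>a\<in>A. a \<bullet> x \<le> a0 \<bullet> x"
    using support_fun_att[OF assms(1)] by blast
  obtain b0 where b0: "b0 \<in> B" "support_fun B x = b0 \<bullet> x" "\<forall>a\<in>B. a \<bullet> x \<le> b0 \<bullet> x"
    using support_fun_att[OF assms(2)] by blast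
  have "support_fun (A + B) x = (a0 + b0) \<bullet> x"
    apply (rule support_fun_max)
    using a0 b0 by (auto simp: set_plus_def inner_add_left intro!: add_mono)
  ultimately show ?thesis using a0 b0 by (simp add: inner_add_left)
qed

lemma cb_scale:
  assumes "cb A" "(c::real) \<ge> 0"
  shows "cb ((\<lambda>v. c *\<^sub>R v) ` A) \<and> support_fun ((\<lambda>v. c *\<^sub>R v) ` A) x = c * support_fun A x"
proof -
  have "cb ((\<lambda>v. c *\<^sub>R v) ` A)" using assms unfolding cb_def
    by (auto intro: convex_scaling compact_scaling)
  moreover
  obtain a0 where a0: "a0 \<in> A" "support_fun A x = a0 \<bullet> x" "\<forall>a\<in>A. a \<bullet> x \<le> a0 \<bullet> x"
    using support_fun_att[OF assms(1)] by blast
  have "support_fun ((\<lambda>v. c *\<^sub>R v) ` A) x = (c *\<^sub>R a0) \<bullet> x"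
    apply (rule support_fun_max)
    using a0 assms(2) by (auto intro: mult_left_mono)
  ultimately show ?thesis using a0 by simp
qed

lemma cb_sum:
  fixes A :: "nat \<Rightarrow> 'a::euclidean_space set" and n :: nat
  assumes "\<forall>i<n. cb (A i)"
  shows "cb (\<Sum>i<n. A i) \<and> support_fun (\<Sum>i<n. A i) x = (\<Sum>i<n. support_fun (A i) x)"
  using assms
proof (induction n)
  case 0
  have "support_fun {0::'a} x = 0" by (rule trans[OF support_fun_max]) auto
  then show ?case by (simp add: cb_def)
next
  case (Suc n)
  then show ?case using cb_plus[of "\<Sum>i<n. A i" "A n" x] by simp
qed

lemma cb_inj_sub:
  assumes "cb A" "cb B" "\<forall>x. support_fun A x = support_fun B x"
  shows "A \<subseteq> B"
proof
  fix z assume z: "z \<in> A"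
  show "z \<in> B"
  proof (rule ccontr)
    assume "z \<notin> B"
    then obtain a b where ab: "a \<bullet> z < b" "\<forall>y\<in>B. b < a \<bullet> y"
      using separating_hyperplane_closed_point[of B z] assms(2) compact_imp_closed
      unfolding cb_def by blast
    obtain a0 where a0: "a0 \<in> A" "support_fun A (-a) = a0 \<bullet> (-a)" "\<forall>y\<in>A. y \<bullet> (-a) \<le> a0 \<bullet> (-a)"
      using support_fun_att[OF assms(1)] by blast
    obtain b0 where b0: "b0 \<in> B" "support_fun B (-a) = b0 \<bullet> (-a)"
      using support_fun_att[OF assms(2)] by blast
    have "z \<bullet> (-a) \<le> a0 \<bullet> (-a)" using a0 z by blast
    then have h1: "a0 \<bullet> a \<le> z \<bullet> a" by simp
    have h2: "b < a \<bullet> b0" using ab b0 by blast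
    have h3: "a0 \<bullet> (-a) = b0 \<bullet> (-a)" using a0 b0 assms(3) by metis
    have "a \<bullet> b0 = b0 \<bullet> a" "a \<bullet> z = z \<bullet> a" by (simp_all add: inner_commute)
    then show False using h1 h2 h3 ab(1) by simp
  qed
qed

lemma cb_inj:
  assumes "cb A" "cb B" "\<forall>x. support_fun A x = support_fun B x"
  shows "A = B"
  using cb_inj_sub assms by (metis subset_antisym)

lemma span_H_support: "cb B \<Longrightarrow> support_fun B \<in> span_H"
  unfolding span_H_def
  by (rule CollectI, rule exI[of _ 1], rule exI[of _ "\<lambda>_. 1"], rule exI[of _ "\<lambda>_. B"])
     (simp add: cb_iff)

lemma span_H_zero: "(\<lambda>x::'a::euclidean_space. 0) \<in> span_H"
  unfolding span_H_def by (rule CollectI, rule exI[of _ 0]) simp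

lemma span_H_scale: fixes f :: "'a::euclidean_space \<Rightarrow> real" shows "f \<in> span_H \<Longrightarrow> (\<lambda>x. c * f x) \<in> span_H"
  unfolding span_H_def
proof (elim CollectE exE conjE, intro CollectI)
  fix k :: nat and cc :: "nat \<Rightarrow> real" and B :: "nat \<Rightarrow> 'a set" assume h: "\<forall>i<k. B i \<in> convex_bodies" "f = (\<lambda>x. \<Sum>i<k. cc i * support_fun (B i) x)"
  show "\<exists>(k::nat) (ca::nat\<Rightarrow>real) (B::nat\<Rightarrow>'a set). (\<forall>i<k. B i \<in> convex_bodies) \<and> (\<lambda>x. c * f x) = (\<lambda>x. \<Sum>i<k. ca i * support_fun (B i) x)"
    using h by (intro exI[of _ k] exI[of _ "\<lambda>i. c * cc i"] exI[of _ B])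
       (simp add: sum_distrib_left mult.assoc)
qed

lemma span_H_add: fixes f g :: "'a::euclidean_space \<Rightarrow> real" shows "f \<in> span_H \<Longrightarrow> g \<in> span_H \<Longrightarrow> (\<lambda>x. f x + g x) \<in> span_H"
  unfolding span_H_def
proof (elim CollectE exE conjE, intro CollectI)
  fix k1 k2 :: nat and c1 c2 :: "nat \<Rightarrow> real" and B1 B2 :: "nat \<Rightarrow> 'a set"
  assume h1: "\<forall>i<k1. B1 i \<in> convex_bodies" "f = (\<lambda>x. \<Sum>i<k1. c1 i * support_fun (B1 i) x)"
    and h2: "\<forall>i<k2. B2 i \<in> convex_bodies" "g = (\<lambda>x. \<Sum>i<k2. c2 i * support_fun (B2 i) x)"
  define c where "c = (\<lambda>i. if i < k1 then c1 i else c2 (i - k1))"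
  define B where "B = (\<lambda>i. if i < k1 then B1 i else B2 (i - k1))"
  have "(\<lambda>x. f x + g x) = (\<lambda>x. \<Sum>i<k1+k2. c i * support_fun (B i) x)"
  proof
    fix x
    have "(\<Sum>i<k1+k2. c i * support_fun (B i) x) =
        (\<Sum>i<k1. c i * support_fun (B i) x) + (\<Sum>i=k1..<k1+k2. c i * support_fun (B i) x)"
    proof -
      have e: "{..<k1+k2} = {..<k1} \<union> {k1..<k1+k2}" by auto
      show ?thesis unfolding e by (rule sum.union_disjoint) auto
    qed
    also have "(\<Sum>i<k1. c i * support_fun (B i) x) = f x"
      by (simp add: h1 c_def B_def)
    also have "(\<Sum>i=k1..<k1+k2. c i * support_fun (B i) x) = (\<Sum>i=0..<k2. c (i+k1) * support_fun (B (i+k1)) x)"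
      using sum.shift_bounds_nat_ivl[of "\<lambda>i. c i * support_fun (B i) x" 0 k1 k2] by (simp add: add.commute)
    also have "\<dots> = g x" by (simp add: h2 c_def B_def atLeast0LessThan)
    finally show "f x + g x = (\<Sum>i<k1+k2. c i * support_fun (B i) x)" by simp
  qed
  moreover have "\<forall>i<k1+k2. B i \<in> convex_bodies" using h1 h2 by (auto simp: B_def)
  ultimately show "\<exists>(k::nat) (c::nat\<Rightarrow>real) (B::nat\<Rightarrow>'a set). (\<forall>i<k. B i \<in> convex_bodies) \<and> (\<lambda>x. f x + g x) = (\<lambda>x. \<Sum>i<k. c i * support_fun (B i) x)"
    by blast
qed

lemma span_H_diff: fixes f g :: "'a::euclidean_space \<Rightarrow> real" shows "f \<in> span_H \<Longrightarrow> g \<in> span_H \<Longrightarrow> (\<lambda>x. f x - g x) \<in> span_H"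
  using span_H_add[of f "\<lambda>x. (-1) * g x"] span_H_scale[of g "-1"] by simp

lemma span_H_sum: fixes u :: "nat \<Rightarrow> 'a::euclidean_space \<Rightarrow> real" and n :: nat shows "\<forall>i<n. u i \<in> span_H \<Longrightarrow> (\<lambda>x. \<Sum>i<n. u i x) \<in> span_H"
proof (induction n)
  case 0 then show ?case using span_H_zero by simp
next
  case (Suc n) then show ?case using span_H_add[of "\<lambda>x. \<Sum>i<n. u i x" "u n"] by simp
qed


context
  fixes ip :: "('a::euclidean_space \<Rightarrow> real) \<Rightarrow> ('a \<Rightarrow> real) \<Rightarrow> real"
  assumes P: "inner_product_on_span_H ip"
begin

lemma ip_sym: "f \<in> span_H \<Longrightarrow> g \<in> span_H \<Longrightarrow> ip f g = ip g f"
  using P unfolding inner_product_on_span_H_def by blast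

lemma ip_addL: "f \<in> span_H \<Longrightarrow> g \<in> span_H \<Longrightarrow> k \<in> span_H \<Longrightarrow> ip (\<lambda>x. f x + g x) k = ip f k + ip g k"
  using P unfolding inner_product_on_span_H_def by blast

lemma ip_scaleL: "f \<in> span_H \<Longrightarrow> g \<in> span_H \<Longrightarrow> ip (\<lambda>x. c * f x) g = c * ip f g"
  using P unfolding inner_product_on_span_H_def by blast

lemma ip_nonneg: "f \<in> span_H \<Longrightarrow> ip f f \<ge> 0"
  using P unfolding inner_product_on_span_H_def by blast

lemma ip_zero: "f \<in> span_H \<Longrightarrow> ip f f = 0 \<Longrightarrow> f = (\<lambda>x. 0)"
  using P unfolding inner_product_on_span_H_def by blast

lemma ip_zeroL: "g \<in> span_H \<Longrightarrow> ip (\<lambda>x. 0) g = 0"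
  using ip_scaleL[of "\<lambda>x. 0" g 0] span_H_zero by simp

lemma ip_expand:
  assumes "f \<in> span_H" "g \<in> span_H"
  shows "ip (\<lambda>x. f x + g x) (\<lambda>x. f x + g x) = ip f f + 2 * ip f g + ip g g"
proof -
  have fg: "(\<lambda>x. f x + g x) \<in> span_H" using assms span_H_add by blast
  have "ip (\<lambda>x. f x + g x) (\<lambda>x. f x + g x) = ip f (\<lambda>x. f x + g x) + ip g (\<lambda>x. f x + g x)"
    using ip_addL assms fg by blast
  also have "ip f (\<lambda>x. f x + g x) = ip f f + ip g f"
    using ip_sym[OF assms(1) fg] ip_addL[OF assms(1,2,1)] by simp
  also have "ip g (\<lambda>x. f x + g x) = ip f g + ip g g"
    using ip_sym[OF assms(2) fg] ip_addL[OF assms(1,2,2)] by simp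
  finally show ?thesis using ip_sym[OF assms] by simp
qed

lemma ip_sumL:
  fixes u :: "nat \<Rightarrow> 'a \<Rightarrow> real" and n :: nat
  assumes "\<forall>i<n. u i \<in> span_H" "v \<in> span_H"
  shows "(\<Sum>i<n. ip (u i) v) = ip (\<lambda>x. \<Sum>i<n. u i x) v"
  using assms(1)
proof (induction n)
  case 0 then show ?case using ip_zeroL[OF assms(2)] by simp
next
  case (Suc n)
  have s: "(\<lambda>x. \<Sum>i<n. u i x) \<in> span_H" using Suc.prems by (intro span_H_sum) auto
  have "ip (\<lambda>x. \<Sum>i<Suc n. u i x) v = ip (\<lambda>x. (\<Sum>i<n. u i x) + u n x) v" by simp
  also have "\<dots> = ip (\<lambda>x. \<Sum>i<n. u i x) v + ip (u n) v"
    using ip_addL[OF s _ assms(2), of "u n"] Suc.prems by simp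
  finally show ?case using Suc by simp
qed

end

theorem proposition8:
  fixes ip :: "('a::euclidean_space \<Rightarrow> real) \<Rightarrow> ('a \<Rightarrow> real) \<Rightarrow> real"
    and A :: "nat \<Rightarrow> 'a set"
    and N :: nat
  assumes "inner_product_on_span_H ip"
    and "N \<ge> 1"
    and "\<forall>i<N. A i \<in> convex_bodies"
  shows "minkowski_average N A \<in> convex_bodies \<and>
         (\<forall>X\<in>convex_bodies.
            (\<forall>Y\<in>convex_bodies. (\<Sum>i<N. (body_dist ip (A i) X)\<^sup>2) \<le> (\<Sum>i<N. (body_dist ip (A i) Y)\<^sup>2))
            \<longleftrightarrow> X = minkowski_average N A)"
proof -
  note P = assms(1)
  define M where "M = minkowski_average N A"
  define m where "m = support_fun M"
  have cbA: "\<forall>i<N. cb (A i)" using assms(3) cb_iff by blast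
  have N0: "real N > 0" using assms(2) by simp
  have cbM: "cb M" and mx: "\<And>x. m x = (1 / real N) * (\<Sum>i<N. support_fun (A i) x)"
    using cb_sum[OF cbA] cb_scale[of "\<Sum>i<N. A i" "1 / real N"] N0
    unfolding M_def m_def minkowski_average_def by auto
  have mH: "m \<in> span_H" using span_H_support[OF cbM] m_def by simp
  define u where "u = (\<lambda>i x. support_fun (A i) x - m x)"
  have uH: "\<forall>i<N. u i \<in> span_H"
    using span_H_diff[OF span_H_support mH] cbA unfolding u_def by blast
  have usum: "(\<lambda>x. \<Sum>i<N. u i x) = (\<lambda>x. 0)"
  proof
    fix x
    have "(\<Sum>i<N. u i x) = (\<Sum>i<N. support_fun (A i) x) - real N * m x"
      unfolding u_def by (simp add: sum_subtractf)
    then show "(\<Sum>i<N. u i x) = 0" using mx N0 by simp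
  qed
  define C where "C = (\<Sum>i<N. ip (u i) (u i))"
  define v where "v = (\<lambda>Y x. m x - support_fun Y x)"
  have vH: "v Y \<in> span_H" if "cb Y" for Y
    using span_H_diff[OF mH span_H_support[OF that]] unfolding v_def by blast
  have key: "(\<Sum>i<N. (body_dist ip (A i) Y)\<^sup>2) = C + real N * ip (v Y) (v Y)" if Y: "cb Y" for Y
  proof -
    have "(\<Sum>i<N. (body_dist ip (A i) Y)\<^sup>2) = (\<Sum>i<N. ip (u i) (u i) + 2 * ip (u i) (v Y) + ip (v Y) (v Y))"
    proof (rule sum.cong[OF refl])
      fix i assume "i \<in> {..<N}"
      then have ui: "u i \<in> span_H" using uH by simp
      have e: "(\<lambda>x. support_fun (A i) x - support_fun Y x) = (\<lambda>x. u i x + v Y x)"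
        unfolding u_def v_def by auto
      have "(body_dist ip (A i) Y)\<^sup>2 = ip (\<lambda>x. u i x + v Y x) (\<lambda>x. u i x + v Y x)"
        unfolding body_dist_def e
        using ip_nonneg[OF P span_H_add[OF ui vH[OF Y]]] by simp
      then show "(body_dist ip (A i) Y)\<^sup>2 = ip (u i) (u i) + 2 * ip (u i) (v Y) + ip (v Y) (v Y)"
        using ip_expand[OF P ui vH[OF Y]] by simp
    qed
    also have "\<dots> = C + 2 * (\<Sum>i<N. ip (u i) (v Y)) + real N * ip (v Y) (v Y)"
      unfolding C_def by (simp add: sum.distrib sum_distrib_left)
    also have "(\<Sum>i<N. ip (u i) (v Y)) = 0"
      using ip_sumL[OF P uH vH[OF Y]] usum ip_zeroL[OF P vH[OF Y]] by simp
    finally show ?thesis by simp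
  qed
  have vM: "v M = (\<lambda>x. 0)" unfolding v_def m_def by simp
  have QM: "ip (v M) (v M) = 0" using vM ip_zeroL[OF P span_H_zero] by simp
  have "(\<forall>Y\<in>convex_bodies. (\<Sum>i<N. (body_dist ip (A i) X)\<^sup>2) \<le> (\<Sum>i<N. (body_dist ip (A i) Y)\<^sup>2))
            \<longleftrightarrow> X = M" if X: "X \<in> convex_bodies" for X
  proof
    assume H: "\<forall>Y\<in>convex_bodies. (\<Sum>i<N. (body_dist ip (A i) X)\<^sup>2) \<le> (\<Sum>i<N. (body_dist ip (A i) Y)\<^sup>2)"
    have cX: "cb X" using X cb_iff by blast
    have "M \<in> convex_bodies" using cbM cb_iff by blast
    then have "C + real N * ip (v X) (v X) \<le> C + real N * ip (v M) (v M)"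
      using H key[OF cX] key[OF cbM] by metis
    then have "ip (v X) (v X) \<le> 0" using QM N0 by (simp add: mult_le_0_iff)
    then have "ip (v X) (v X) = 0" using ip_nonneg[OF P vH[OF cX]] by simp
    then have "v X = (\<lambda>x. 0)" using ip_zero[OF P vH[OF cX]] by simp
    then have "\<forall>x. support_fun X x = support_fun M x" unfolding v_def m_def by (metis eq_iff_diff_eq_0)
    then show "X = M" using cb_inj[OF cX cbM] by simp
  next
    assume "X = M"
    show "\<forall>Y\<in>convex_bodies. (\<Sum>i<N. (body_dist ip (A i) X)\<^sup>2) \<le> (\<Sum>i<N. (body_dist ip (A i) Y)\<^sup>2)"
    proof
      fix Y :: "'a set" assume "Y \<in> convex_bodies"
      then have cY: "cb Y" using cb_iff by blast
      have "0 \<le> real N * ip (v Y) (v Y)" using ip_nonneg[OF P vH[OF cY]] N0 by simp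
      then show "(\<Sum>i<N. (body_dist ip (A i) X)\<^sup>2) \<le> (\<Sum>i<N. (body_dist ip (A i) Y)\<^sup>2)"
        using key[OF cY] key[OF cbM] QM \<open>X = M\<close> by simp
    qed
  qed
  then show ?thesis using cbM cb_iff unfolding M_def by blast
qed

end
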